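(* Let $X$ be a Banach space with closed linear subspaces $\lambda,\mu$. Then $\lambda\sim^{sc}\mu$ holds if and only if there are a closed subspace $\lambda_1$ of $\lambda$, a closed subspace $\mu_1$ of $\mu$ and a compact linear operator $K_1\in\mathcal{B}(X)$ such that $\dim\lambda/\lambda_1<+\infty$ and $(I+K_1)\lambda_1=\mu_1$. Moreover, in this case $\lambda_1,\mu_1,K_1$ can be chosen such that $I+K_1\colon X\to X$ and $I+K_1\colon\lambda_1\to\mu_1$ are linear isomorphisms.
   Context: For closed subspaces $\lambda,\mu$ of $X$, $\lambda\sim^{sc}\mu$ means there is a compact $K\in\mathcal{B}(X)$ with $(I+K)\lambda\subset\mu$. *)

theory Defs
  imports "HOL-Analysis.Analysis"
begin

definition closed_subspace :: "'a::real_normed_vector set \<Rightarrow> bool" where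
  "closed_subspace S \<longleftrightarrow> subspace S \<and> closed S"

definition compact_op :: "('a::real_normed_vector \<Rightarrow> 'a) \<Rightarrow> bool" where
  "compact_op K \<longleftrightarrow> bounded_linear K \<and> compact (closure (K ` ball 0 1))"

definition sc_equiv :: "'a::real_normed_vector set \<Rightarrow> 'a set \<Rightarrow> bool" where
  "sc_equiv L M \<longleftrightarrow> (\<exists>K. compact_op K \<and> (\<lambda>x. x + K x) ` L \<subseteq> M)"

text \<open>dim (L / L1) < \<infinity> for a subspace L1 \<subseteq> L: L is spanned by L1 together with
  finitely many vectors of L.\<close>
definition finite_codim_in :: "'a::real_vector set \<Rightarrow> 'a set \<Rightarrow> bool" where
  "finite_codim_in L1 L \<longleftrightarrow> (\<exists>S. finite S \<and> S \<subseteq> L \<and> L \<subseteq> span (L1 \<union> S))"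

definition lin_iso :: "('a::real_normed_vector \<Rightarrow> 'a) \<Rightarrow> bool" where
  "lin_iso T \<longleftrightarrow> bounded_linear T \<and> (\<exists>G. bounded_linear G \<and> G \<circ> T = id \<and> T \<circ> G = id)"

definition lin_iso_between :: "('a::real_normed_vector \<Rightarrow> 'a) \<Rightarrow> 'a set \<Rightarrow> 'a set \<Rightarrow> bool" where
  "lin_iso_between T A B \<longleftrightarrow> linear T \<and> bij_betw T A B \<and> continuous_on A T
     \<and> continuous_on B (inv_into A T)"

end

theory Submission
  imports Defs
begin


definition lgraph :: "real \<Rightarrow> ('a::real_normed_vector \<times> real) set \<Rightarrow> bool" where
 "lgraph k G \<longleftrightarrow> (0,0) \<in> G \<and> (\<forall>x a b. (x,a)\<in>G \<longrightarrow> (x,b)\<in>G \<longrightarrow> a = b)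
   \<and> (\<forall>x a y b. (x,a)\<in>G \<longrightarrow> (y,b)\<in>G \<longrightarrow> (x+y,a+b)\<in>G)
   \<and> (\<forall>x a c. (x,a)\<in>G \<longrightarrow> (c *\<^sub>R x, c*a) \<in> G)
   \<and> (\<forall>x a. (x,a)\<in>G \<longrightarrow> a \<le> k * norm x)"

lemma lgraph_ext_one:
  assumes lg: "lgraph k G" and x0: "x0 \<notin> fst ` G" and k0: "k \<ge> 0"
  shows "\<exists>G'. lgraph k G' \<and> G \<subseteq> G' \<and> G' \<noteq> G"
proof -
  have G0: "(0,0)\<in>G" and funct: "\<And>x a b. (x,a)\<in>G \<Longrightarrow> (x,b)\<in>G \<Longrightarrow> a = b"
    and add: "\<And>x a y b. (x,a)\<in>G \<Longrightarrow> (y,b)\<in>G \<Longrightarrow> (x+y,a+b)\<in>G"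
    and scl: "\<And>x a c. (x,a)\<in>G \<Longrightarrow> (c *\<^sub>R x, c*a) \<in> G"
    and dom: "\<And>x a. (x,a)\<in>G \<Longrightarrow> a \<le> k * norm x"
    using lg unfolding lgraph_def by blast+
  define S where "S = {a - k * norm (y - x0) | y a. (y,a)\<in>G}"
  have key: "a - k * norm (y - x0) \<le> k * norm (z + x0) - b" if "(y,a)\<in>G" "(z,b)\<in>G" for y a z b
  proof -
    have "a + b \<le> k * norm (y + z)" using dom[OF add[OF that]] .
    also have "norm (y + z) \<le> norm (y - x0) + norm (z + x0)"
      using norm_triangle_ineq[of "y - x0" "z + x0"] by simp
    moreover have "k \<ge> 0" using k0 .
    ultimately have "a + b \<le> k * norm (y - x0) + k * norm (z + x0)"
      by (smt (verit, best) distrib_left mult_left_mono)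
    then show ?thesis by simp
  qed
  define t where "t = Sup S"
  have Sne: "S \<noteq> {}" using G0 unfolding S_def by blast
  have Sbdd: "bdd_above S" unfolding S_def bdd_above_def
    using key[OF _ G0] by fastforce
  have t1: "a - k * norm (y - x0) \<le> t" if "(y,a)\<in>G" for y a
    unfolding t_def using that Sbdd by (auto intro!: cSup_upper simp: S_def)
  have t2: "t \<le> k * norm (z + x0) - b" if "(z,b)\<in>G" for z b
    unfolding t_def using Sne key[OF _ that] by (auto intro!: cSup_least simp: S_def)
  define G' where "G' = {(y + c *\<^sub>R x0, a + c * t) | y a c. (y,a)\<in>G}"
  have "lgraph k G'"
    unfolding lgraph_def
  proof (intro conjI allI impI)
    show "(0,0) \<in> G'" unfolding G'_def using G0 by force
  next
    fix x a b assume "(x,a)\<in>G'" "(x,b)\<in>G'"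
    then obtain y1 a1 c1 y2 a2 c2 where h: "(y1,a1)\<in>G" "(y2,a2)\<in>G" "x = y1 + c1 *\<^sub>R x0" "a = a1 + c1*t"
      "x = y2 + c2 *\<^sub>R x0" "b = a2 + c2*t" unfolding G'_def by blast
    have "c1 = c2"
    proof (rule ccontr)
      assume ne: "c1 \<noteq> c2"
      have "(y2 + (-1) *\<^sub>R y1, a2 + (-1)*a1) \<in> G" using add[OF h(2) scl[OF h(1)]] .
      from scl[OF this, of "1/(c1-c2)"]
      have "((1/(c1-c2)) *\<^sub>R (y2 - y1), (1/(c1-c2)) * (a2 - a1)) \<in> G" by simp
      moreover have "(1/(c1-c2)) *\<^sub>R (y2 - y1) = x0"
      proof -
        have "y2 - y1 = (c1 - c2) *\<^sub>R x0" using h(3,5) by (simp add: algebra_simps)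
        then show ?thesis using ne by simp
      qed
      ultimately show False using x0 by force
    qed
    moreover then have "y1 = y2" using h by simp
    ultimately show "a = b" using h funct by blast
  next
    fix x a y b assume "(x,a)\<in>G'" "(y,b)\<in>G'"
    then obtain y1 a1 c1 y2 a2 c2 where h: "(y1,a1)\<in>G" "(y2,a2)\<in>G" "x = y1 + c1 *\<^sub>R x0" "a = a1 + c1*t"
      "y = y2 + c2 *\<^sub>R x0" "b = a2 + c2*t" unfolding G'_def by blast
    have "x + y = (y1 + y2) + (c1 + c2) *\<^sub>R x0" "a + b = (a1 + a2) + (c1+c2)*t"
      using h by (simp_all add: algebra_simps)
    then show "(x+y,a+b)\<in>G'" unfolding G'_def using add[OF h(1,2)] by blast
  next
    fix x a c assume "(x,a)\<in>G'"
    then obtain y1 a1 c1 where h: "(y1,a1)\<in>G" "x = y1 + c1 *\<^sub>R x0" "a = a1 + c1*t"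
      unfolding G'_def by blast
    have "c *\<^sub>R x = c *\<^sub>R y1 + (c*c1) *\<^sub>R x0" "c * a = c * a1 + (c*c1)*t"
      using h by (simp_all add: algebra_simps)
    then show "(c *\<^sub>R x, c*a)\<in>G'" unfolding G'_def using scl[OF h(1)] by blast
  next
    fix x a assume "(x,a)\<in>G'"
    then obtain y a1 c where h: "(y,a1)\<in>G" "x = y + c *\<^sub>R x0" "a = a1 + c*t"
      unfolding G'_def by blast
    consider "c = 0" | "c > 0" | "c < 0" by linarith
    then show "a \<le> k * norm x"
    proof cases
      case 1 then show ?thesis using h dom by simp
    next
      case 2
      have "t \<le> k * norm ((1/c) *\<^sub>R y + x0) - (1/c)*a1" using t2[OF scl[OF h(1)]] .
      then have "c * t \<le> c * (k * norm ((1/c) *\<^sub>R y + x0) - (1/c)*a1)"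
        using 2 by (simp add: mult_left_mono)
      also have "\<dots> = k * (c * norm ((1/c) *\<^sub>R y + x0)) - a1" using 2 by (simp add: algebra_simps)
      also have "c * norm ((1/c) *\<^sub>R y + x0) = norm (c *\<^sub>R ((1/c) *\<^sub>R y + x0))"
        using 2 by simp
      also have "c *\<^sub>R ((1/c) *\<^sub>R y + x0) = x" using 2 h by (simp add: algebra_simps)
      finally show ?thesis using h by simp
    next
      case 3
      define d where "d = -c"
      have d: "d > 0" using 3 d_def by simp
      have "(1/d) * a1 - k * norm ((1/d) *\<^sub>R y - x0) \<le> t" using t1[OF scl[OF h(1)]] .
      then have "d * ((1/d) * a1 - k * norm ((1/d) *\<^sub>R y - x0)) \<le> d * t"
        using d by (simp add: mult_left_mono)
      then have "a1 - k * (d * norm ((1/d) *\<^sub>R y - x0)) \<le> d * t" using d by (simp add: algebra_simps)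
      also have "d * norm ((1/d) *\<^sub>R y - x0) = norm (d *\<^sub>R ((1/d) *\<^sub>R y - x0))"
        using d by simp
      also have "d *\<^sub>R ((1/d) *\<^sub>R y - x0) = x" using d h d_def by (simp add: algebra_simps)
      finally show ?thesis using h d_def by simp
    qed
  qed
  moreover have "G \<subseteq> G'" unfolding G'_def by force
  moreover have "(x0, t) \<in> G'" unfolding G'_def using G0 by force
  then have "G' \<noteq> G" using x0 by force
  ultimately show ?thesis by blast
qed

lemma lgraph_hb:
  assumes lg: "lgraph k (G0 :: ('a::real_normed_vector \<times> real) set)" and k0: "k \<ge> 0"
  shows "\<exists>f. bounded_linear f \<and> (\<forall>x a. (x,a)\<in>G0 \<longrightarrow> f x = a)"
proof -
  define A where "A = {G. lgraph k G \<and> G0 \<subseteq> G}"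
  have "\<exists>U\<in>A. \<forall>X\<in>C. X \<subseteq> U" if C: "C \<in> chains A" for C
  proof (cases "C = {}")
    case True then show ?thesis using lg unfolding A_def by blast
  next
    case False
    have CA: "C \<subseteq> A" and ch: "\<And>X Y. X \<in> C \<Longrightarrow> Y \<in> C \<Longrightarrow> X \<subseteq> Y \<or> Y \<subseteq> X"
      using C unfolding chains_def chain_subset_def by blast+
    have L: "\<And>X. X \<in> C \<Longrightarrow> lgraph k X" and G0s: "\<And>X. X \<in> C \<Longrightarrow> G0 \<subseteq> X" using CA unfolding A_def by blast+
    have two: "\<exists>Z\<in>C. p \<in> Z \<and> q \<in> Z" if "p \<in> \<Union>C" "q \<in> \<Union>C" for p q
      using that ch by blast
    have "lgraph k (\<Union>C)"
      unfolding lgraph_def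
    proof (intro conjI allI impI)
      show "(0,0) \<in> \<Union>C" using False L unfolding lgraph_def by blast
    next
      fix x a b assume "(x,a)\<in>\<Union>C" "(x,b)\<in>\<Union>C"
      then obtain Z where "Z\<in>C" "(x,a)\<in>Z" "(x,b)\<in>Z" using two by blast
      then show "a = b" using L unfolding lgraph_def by blast
    next
      fix x a y b assume "(x,a)\<in>\<Union>C" "(y,b)\<in>\<Union>C"
      then obtain Z where "Z\<in>C" "(x,a)\<in>Z" "(y,b)\<in>Z" using two by blast
      then show "(x+y,a+b)\<in>\<Union>C" using L unfolding lgraph_def by blast
    next
      fix x a c assume "(x,a)\<in>\<Union>C"
      then obtain Z where "Z\<in>C" "(x,a)\<in>Z" by blast
      then show "(c *\<^sub>R x, c*a)\<in>\<Union>C" using L unfolding lgraph_def by blast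
    next
      fix x a assume "(x,a)\<in>\<Union>C"
      then obtain Z where "Z\<in>C" "(x,a)\<in>Z" by blast
      then show "a \<le> k * norm x" using L unfolding lgraph_def by blast
    qed
    moreover have "G0 \<subseteq> \<Union>C" using False G0s by blast
    ultimately show ?thesis unfolding A_def by blast
  qed
  then obtain M where MA: "M \<in> A" and Mmax: "\<forall>X\<in>A. M \<subseteq> X \<longrightarrow> X = M"
    using Zorn_Lemma2[of A] by blast
  have lM: "lgraph k M" and G0M: "G0 \<subseteq> M" using MA unfolding A_def by blast+
  have full: "x \<in> fst ` M" for x
  proof (rule ccontr)
    assume "x \<notin> fst ` M"
    from lgraph_ext_one[OF lM this k0] obtain G' where "lgraph k G'" "M \<subseteq> G'" "G' \<noteq> M" by blast
    then show False using Mmax G0M unfolding A_def by blast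
  qed
  have funct: "\<And>x a b. (x,a)\<in>M \<Longrightarrow> (x,b)\<in>M \<Longrightarrow> a = b"
    and add: "\<And>x a y b. (x,a)\<in>M \<Longrightarrow> (y,b)\<in>M \<Longrightarrow> (x+y,a+b)\<in>M"
    and scl: "\<And>x a c. (x,a)\<in>M \<Longrightarrow> (c *\<^sub>R x, c*a) \<in> M"
    and dom: "\<And>x a. (x,a)\<in>M \<Longrightarrow> a \<le> k * norm x"
    using lM unfolding lgraph_def by blast+
  define f where "f x = (THE a. (x,a)\<in>M)" for x
  have fM: "(x, f x) \<in> M" for x
  proof -
    obtain a where "(x,a)\<in>M" using full[of x] by force
    then show ?thesis unfolding f_def using funct by (metis theI)
  qed
  have fe: "(x,a)\<in>M \<Longrightarrow> f x = a" for x a using fM funct by blast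
  have "bounded_linear f"
  proof (rule bounded_linear_intro[where K=k])
    show "f (x + y) = f x + f y" for x y using fe[OF add[OF fM fM]] .
    show "f (r *\<^sub>R x) = r *\<^sub>R f x" for r x using fe[OF scl[OF fM]] by simp
    show "norm (f x) \<le> norm x * k" for x
    proof -
      have "f x \<le> k * norm x" using dom[OF fM] .
      moreover have "- f x \<le> k * norm x" using dom[OF scl[OF fM[of x], of "-1"]] by simp
      ultimately show ?thesis by (simp add: abs_le_iff mult.commute)
    qed
  qed
  moreover have "\<forall>x a. (x,a)\<in>G0 \<longrightarrow> f x = a" using G0M fe by blast
  ultimately show ?thesis by blast
qed

lemma hb_sep:
  fixes Y :: "'a::real_normed_vector set"
  assumes Y: "subspace Y" "closed Y" and x: "x \<notin> Y"
  shows "\<exists>f::'a\<Rightarrow>real. bounded_linear f \<and> (\<forall>y\<in>Y. f y = 0) \<and> f x = 1"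
proof -
  have "0 \<in> Y" using Y subspace_0 by blast
  then have d: "infdist x Y > 0" using infdist_pos_not_in_closed[OF Y(2) _ x] by blast
  define d where "d = infdist x Y"
  define G0 where "G0 = {(y + c *\<^sub>R x, c) | y c. y \<in> Y}"
  have "lgraph (1/d) G0"
    unfolding lgraph_def
  proof (intro conjI allI impI)
    show "(0,0)\<in>G0" unfolding G0_def using \<open>0\<in>Y\<close> by force
  next
    fix z a b assume "(z,a)\<in>G0" "(z,b)\<in>G0"
    then obtain y1 y2 where h: "y1\<in>Y" "y2\<in>Y" "z = y1 + a *\<^sub>R x" "z = y2 + b *\<^sub>R x"
      unfolding G0_def by blast
    show "a = b"
    proof (rule ccontr)
      assume ne: "a \<noteq> b"
      have "(a - b) *\<^sub>R x = y2 - y1" using h by (simp add: algebra_simps)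
      moreover have "x = (1/(a-b)) *\<^sub>R ((a - b) *\<^sub>R x)" using ne by simp
      ultimately have "x = (1/(a-b)) *\<^sub>R (y2 - y1)" by simp
      moreover have "(1/(a-b)) *\<^sub>R (y2 - y1) \<in> Y" using h Y by (simp add: subspace_scale subspace_diff)
      ultimately show False using x by simp
    qed
  next
    fix z a w b assume "(z,a)\<in>G0" "(w,b)\<in>G0"
    then obtain y1 y2 where h: "y1\<in>Y" "y2\<in>Y" "z = y1 + a *\<^sub>R x" "w = y2 + b *\<^sub>R x"
      unfolding G0_def by blast
    have "z + w = (y1 + y2) + (a+b) *\<^sub>R x" using h by (simp add: algebra_simps)
    moreover have "y1 + y2 \<in> Y" using h Y subspace_add by blast
    ultimately show "(z+w,a+b)\<in>G0" unfolding G0_def by blast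
  next
    fix z a c assume "(z,a)\<in>G0"
    then obtain y1 where h: "y1\<in>Y" "z = y1 + a *\<^sub>R x" unfolding G0_def by blast
    have "c *\<^sub>R z = c *\<^sub>R y1 + (c*a) *\<^sub>R x" using h by (simp add: algebra_simps)
    moreover have "c *\<^sub>R y1 \<in> Y" using h Y subspace_scale by blast
    ultimately show "(c *\<^sub>R z, c*a)\<in>G0" unfolding G0_def by blast
  next
    fix z a assume "(z,a)\<in>G0"
    then obtain y1 where h: "y1\<in>Y" "z = y1 + a *\<^sub>R x" unfolding G0_def by blast
    show "a \<le> 1/d * norm z"
    proof (cases "a > 0")
      case False then show ?thesis using d d_def by (smt (verit) divide_nonneg_nonneg norm_ge_zero mult_nonneg_nonneg)
    next
      case True
      have "- (1/a) *\<^sub>R y1 \<in> Y" using h Y by (simp add: subspace_neg subspace_scale)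
      then have "d \<le> dist x (- (1/a) *\<^sub>R y1)" unfolding d_def by (rule infdist_le)
      also have "dist x (- (1/a) *\<^sub>R y1) = norm ((1/a) *\<^sub>R z)"
        using True h by (simp add: dist_norm algebra_simps)
      also have "\<dots> = norm z / a" using True by simp
      finally have "d \<le> norm z / a" .
      then have "a * d \<le> norm z" using True by (simp add: field_simps)
      then show ?thesis using d d_def by (simp add: field_simps)
    qed
  qed
  moreover have "1/d \<ge> 0" using d d_def by simp
  ultimately have "\<exists>f. bounded_linear f \<and> (\<forall>x a. (x,a)\<in>G0 \<longrightarrow> f x = a)" by (rule lgraph_hb)
  then obtain f where f: "bounded_linear f" "\<forall>z a. (z,a)\<in>G0 \<longrightarrow> f z = a" by blast
  have "\<forall>y\<in>Y. f y = 0" using f(2) unfolding G0_def by force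
  moreover have "f x = 1"
  proof -
    have "(0 + 1 *\<^sub>R x, 1) \<in> G0" unfolding G0_def using \<open>0\<in>Y\<close> by blast
    then show ?thesis using f(2) by simp
  qed
  ultimately show ?thesis using f(1) by blast
qed



lemma compact_op_iff:
  "compact_op K \<longleftrightarrow> bounded_linear K \<and> (\<exists>c. compact c \<and> K ` ball 0 1 \<subseteq> c)"
proof
  assume a: "compact_op K"
  have "K ` ball 0 1 \<subseteq> closure (K ` ball 0 1)" by (rule closure_subset)
  then show "bounded_linear K \<and> (\<exists>c. compact c \<and> K ` ball 0 1 \<subseteq> c)"
    using a unfolding compact_op_def by blast
next
  assume "bounded_linear K \<and> (\<exists>c. compact c \<and> K ` ball 0 1 \<subseteq> c)"
  then obtain c where K: "bounded_linear K" and c: "compact c" "K ` ball 0 1 \<subseteq> c" by blast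
  have sub: "closure (K ` ball 0 1) \<subseteq> c" using c(2) compact_imp_closed[OF c(1)] by (rule closure_minimal)
  have "compact (c \<inter> closure (K ` ball 0 1))" using c(1) closed_closure by (rule compact_Int_closed)
  moreover have "c \<inter> closure (K ` ball 0 1) = closure (K ` ball 0 1)" using sub by (rule Int_absorb1)
  ultimately have "compact (closure (K ` ball 0 1))" by simp
  then show "compact_op K" using K unfolding compact_op_def by blast
qed

lemma compact_op_bounded:
  assumes K: "compact_op K" and B: "bounded B"
  shows "\<exists>c. compact c \<and> K ` B \<subseteq> c"
proof -
  obtain c where lK: "bounded_linear K" and c: "compact c" "K ` ball 0 1 \<subseteq> c"
    using K unfolding compact_op_iff by blast
  obtain r where r: "r > 0" "B \<subseteq> ball 0 r" using B bounded_subset_ballD by blast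
  have "K ` B \<subseteq> (\<lambda>x. r *\<^sub>R x) ` c"
  proof
    fix z assume "z \<in> K ` B"
    then obtain x where x: "x \<in> B" "z = K x" by blast
    have "norm x < r" using x(1) r(2) by auto
    then have "norm ((1/r) *\<^sub>R x) < 1" using r(1) by (simp add: field_simps)
    then have "(1/r) *\<^sub>R x \<in> ball 0 1" by simp
    then have "K ((1/r) *\<^sub>R x) \<in> c" using c(2) by blast
    moreover have "K ((1/r) *\<^sub>R x) = (1/r) *\<^sub>R K x" using lK by (simp add: linear_simps)
    then have "z = r *\<^sub>R K ((1/r) *\<^sub>R x)" using x r by simp
    ultimately show "z \<in> (\<lambda>x. r *\<^sub>R x) ` c" by blast
  qed
  then show ?thesis using compact_scaling[OF c(1)] by blast
qed
lemma compact_op_linear: "compact_op K \<Longrightarrow> bounded_linear K"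
  unfolding compact_op_def by blast

lemma compact_op_add:
  assumes "compact_op K1" "compact_op K2"
  shows "compact_op (\<lambda>x. K1 x + K2 x)"
proof -
  obtain c1 c2 where c: "compact c1" "K1 ` ball 0 1 \<subseteq> c1" "compact c2" "K2 ` ball 0 1 \<subseteq> c2"
    using assms compact_op_iff by metis
  have "(\<lambda>x. K1 x + K2 x) ` ball 0 1 \<subseteq> {x + y | x y. x \<in> c1 \<and> y \<in> c2}" using c by blast
  moreover have "bounded_linear (\<lambda>x. K1 x + K2 x)"
    using assms compact_op_linear bounded_linear_add by blast
  ultimately show ?thesis unfolding compact_op_iff using compact_sums[OF c(1,3)] by blast
qed

lemma compact_op_compose_left:
  assumes "bounded_linear B" "compact_op K"
  shows "compact_op (\<lambda>x. B (K x))"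
proof -
  obtain c where c: "compact c" "K ` ball 0 1 \<subseteq> c" using assms compact_op_iff by metis
  have "(\<lambda>x. B (K x)) ` ball 0 1 \<subseteq> B ` c" using c by blast
  moreover have "compact (B ` c)"
    using c(1) assms(1) by (simp add: compact_continuous_image linear_continuous_on)
  moreover have "bounded_linear (\<lambda>x. B (K x))"
    using assms compact_op_linear bounded_linear_compose by blast
  ultimately show ?thesis unfolding compact_op_iff by blast
qed

lemma compact_op_compose_right:
  assumes "compact_op K" "bounded_linear B"
  shows "compact_op (\<lambda>x. K (B x))"
proof -
  have "bounded (B ` ball 0 1)" using assms(2) bounded_linear_image by blast
  then obtain c where c: "compact c" "K ` (B ` ball 0 1) \<subseteq> c" using compact_op_bounded[OF assms(1)] by blast
  moreover have "bounded_linear (\<lambda>x. K (B x))"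
    using assms compact_op_linear bounded_linear_compose by blast
  moreover have "K ` (B ` ball 0 1) = (\<lambda>x. K (B x)) ` ball 0 1" by (simp add: image_image)
  ultimately show ?thesis unfolding compact_op_iff by auto
qed

lemma compact_op_zero: "compact_op (\<lambda>x. 0)"
  unfolding compact_op_iff by (auto intro!: exI[of _ "{0}"])

lemma compact_op_rank1:
  fixes f :: "'a::real_normed_vector \<Rightarrow> real"
  assumes f: "bounded_linear f"
  shows "compact_op (\<lambda>x. f x *\<^sub>R w)"
proof -
  obtain k where k: "\<And>x. norm (f x) \<le> norm x * k" using bounded_linear.bounded[OF f] by blast
  have "(\<lambda>x. f x *\<^sub>R w) ` ball 0 1 \<subseteq> (\<lambda>t. t *\<^sub>R w) ` {-\<bar>k\<bar>..\<bar>k\<bar>}"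
  proof
    fix z assume "z \<in> (\<lambda>x. f x *\<^sub>R w) ` ball 0 1"
    then obtain x where x: "norm x < 1" "z = f x *\<^sub>R w" by auto
    have "\<bar>f x\<bar> \<le> \<bar>k\<bar>"
    proof -
      have "\<bar>f x\<bar> \<le> norm x * k" using k[of x] by simp
      also have "\<dots> \<le> norm x * \<bar>k\<bar>" by (simp add: mult_left_mono)
      also have "\<dots> \<le> 1 * \<bar>k\<bar>" using x(1) by (intro mult_right_mono) auto
      finally show ?thesis by simp
    qed
    then show "z \<in> (\<lambda>t. t *\<^sub>R w) ` {-\<bar>k\<bar>..\<bar>k\<bar>}" using x by (intro image_eqI[of _ _ "f x"]) (auto simp: abs_le_iff)
  qed
  moreover have "compact ((\<lambda>t. t *\<^sub>R w) ` {-\<bar>k\<bar>..\<bar>k\<bar>})"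
    by (intro compact_continuous_image continuous_intros) auto
  moreover have "bounded_linear (\<lambda>x. f x *\<^sub>R w)"
    using bounded_linear_compose[OF bounded_linear_scaleR_left[of w] f] by simp
  ultimately show ?thesis unfolding compact_op_iff by blast
qed

lemma compact_op_sum:
  fixes n :: nat
  assumes "\<And>i. i < n \<Longrightarrow> compact_op (F i)"
  shows "compact_op (\<lambda>x. \<Sum>i<n. F i x)"
  using assms
proof (induction n)
  case 0 then show ?case using compact_op_zero by simp
next
  case (Suc n)
  have "compact_op (\<lambda>x. (\<Sum>i<n. F i x) + F n x)"
    using Suc by (intro compact_op_add) auto
  then show ?case by simp
qed

lemma norm_sym_le: "e \<le> norm (a - b) \<Longrightarrow> e \<le> norm (b - a)"
  by (simp add: norm_minus_commute)

lemma compact_op_no_sep: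
  fixes x :: "nat \<Rightarrow> 'a::real_normed_vector"
  assumes C: "compact_op C" and xb: "\<And>n. norm (x n) \<le> r" and e: "e > 0"
    and sep: "\<And>m n. m \<noteq> n \<Longrightarrow> e \<le> norm (C (x m) - C (x n))"
  shows False
proof -
  have "bounded (range x)" using xb unfolding bounded_iff by blast
  then obtain c where c: "compact c" "C ` range x \<subseteq> c" using compact_op_bounded[OF C] by blast
  then have "\<forall>n. (C \<circ> x) n \<in> c" by auto
  moreover have "seq_compact c" using c(1) compact_imp_seq_compact by blast
  ultimately obtain l s where s: "strict_mono (s::nat\<Rightarrow>nat)" "((C \<circ> x) \<circ> s) \<longlonglongrightarrow> l"
    unfolding seq_compact_def by blast
  then have "Cauchy ((C \<circ> x) \<circ> s)" using LIMSEQ_imp_Cauchy by blast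
  then obtain N where N: "\<And>m n. m \<ge> N \<Longrightarrow> n \<ge> N \<Longrightarrow> dist (((C \<circ> x) \<circ> s) m) (((C \<circ> x) \<circ> s) n) < e"
    using e unfolding Cauchy_def by meson
  have "s (Suc N) \<noteq> s N" using strict_monoD[OF s(1), of N "Suc N"] by simp
  then have "e \<le> norm (C (x (s (Suc N))) - C (x (s N)))" by (rule sep)
  moreover have "dist (((C \<circ> x) \<circ> s) (Suc N)) (((C \<circ> x) \<circ> s) N) < e" using N by simp
  ultimately show False by (simp add: dist_norm)
qed

lemma riesz_lemma:
  fixes Y :: "'a::real_normed_vector set"
  assumes Y: "subspace Y" "closed Y" and V: "subspace V" "Y \<subseteq> V" and v: "v \<in> V" "v \<notin> Y"
  shows "\<exists>x\<in>V. norm x = 1 \<and> (\<forall>y\<in>Y. 1/2 \<le> norm (x - y))"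
proof -
  have "0 \<in> Y" using Y subspace_0 by blast
  define d where "d = infdist v Y"
  have d: "d > 0" using infdist_pos_not_in_closed[OF Y(2) _ v(2)] \<open>0\<in>Y\<close> d_def by blast
  have "infdist v Y < 2 * d" using d d_def by simp
  moreover have "infdist v Y = (INF a\<in>Y. dist v a)" using \<open>0\<in>Y\<close> by (intro infdist_notempty) blast
  ultimately have "(INF a\<in>Y. dist v a) < 2 * d" by simp
  then obtain y0 where y0: "y0 \<in> Y" "dist v y0 < 2 * d"
    using cINF_less_iff[of Y "dist v" "2*d"] \<open>0\<in>Y\<close> by (auto intro: bdd_belowI[of _ 0])
  define r where "r = norm (v - y0)"
  have rd: "d \<le> r" using infdist_le[OF y0(1), of v] d_def r_def by (simp add: dist_norm)
  have r2: "r < 2 * d" using y0 r_def by (simp add: dist_norm)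
  define x where "x = (1/r) *\<^sub>R (v - y0)"
  have "x \<in> V" unfolding x_def using V v y0 by (meson subset_iff subspace_diff subspace_scale)
  moreover have "v \<noteq> y0" using rd d r_def by auto
  then have "norm x = 1" unfolding x_def r_def by simp
  moreover have "1/2 \<le> norm (x - y)" if y: "y \<in> Y" for y
  proof -
    have yy: "y0 + r *\<^sub>R y \<in> Y" using Y y y0 by (simp add: subspace_add subspace_scale)
    have "x - y = (1/r) *\<^sub>R (v - (y0 + r *\<^sub>R y))" unfolding x_def using rd d by (simp add: algebra_simps)
    then have "norm (x - y) = norm (v - (y0 + r *\<^sub>R y)) / r" using rd d by simp
    moreover have "d \<le> norm (v - (y0 + r *\<^sub>R y))" using infdist_le[OF yy, of v] d_def by (simp add: dist_norm)
    ultimately have "norm (x - y) \<ge> d / r" using rd d by (simp add: divide_right_mono)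
    moreover have "d / r \<ge> 1/2" using r2 rd d by (simp add: field_simps)
    ultimately show ?thesis by linarith
  qed
  ultimately show ?thesis by blast
qed

lemma chain_asc:
  assumes C: "compact_op C"
    and Y: "\<And>n. subspace (Y n)" "\<And>n. closed (Y n)"
    and mono: "\<And>n. Y n \<subseteq> Y (Suc n)" and strict: "\<And>n. Y (Suc n) \<noteq> Y n"
    and A: "\<And>n x. x \<in> Y (Suc n) \<Longrightarrow> x + C x \<in> Y n"
  shows False
proof -
  have ex: "\<exists>x. x\<in>Y (Suc n) \<and> norm x = 1 \<and> (\<forall>y\<in>Y n. 1/2 \<le> norm (x - y))" for n
  proof -
    obtain v where "v \<in> Y (Suc n)" "v \<notin> Y n" using mono[of n] strict[of n] by blast
    then show ?thesis using riesz_lemma[OF Y(1)[of n] Y(2)[of n] Y(1)[of "Suc n"] mono[of n]] by blast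
  qed
  obtain x where xx: "\<forall>n. x n\<in>Y (Suc n) \<and> norm (x n) = 1 \<and> (\<forall>y\<in>Y n. 1/2 \<le> norm (x n - y))"
    using choice[of "\<lambda>n x. x\<in>Y (Suc n) \<and> norm x = 1 \<and> (\<forall>y\<in>Y n. 1/2 \<le> norm (x - y))"] ex by blast
  then have x: "\<And>n. x n \<in> Y (Suc n)" "\<And>n. norm (x n) = 1"
    "\<And>n y. y \<in> Y n \<Longrightarrow> 1/2 \<le> norm (x n - y)" by blast+
  have mle: "n \<le> m \<Longrightarrow> Y n \<subseteq> Y m" for n m using lift_Suc_mono_le[of Y, OF mono] by blast
  have lt: "1/2 \<le> norm (C (x m) - C (x n))" if "n < m" for m n
  proof -
    have "(x m + C (x m)) - (x n + C (x n)) + x n \<in> Y m"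
    proof -
      have "x m + C (x m) \<in> Y m" using A x(1) by blast
      moreover have "x n + C (x n) \<in> Y m" using A x(1) mle[of n m] that by auto
      moreover have "x n \<in> Y m" using x(1)[of n] mle[of "Suc n" m] that by auto
      ultimately show ?thesis using Y(1)[of m] by (blast intro: subspace_add subspace_diff)
    qed
    from x(3)[OF this] have "1/2 \<le> norm (x m - ((x m + C (x m)) - (x n + C (x n)) + x n))" .
    moreover have "x m - ((x m + C (x m)) - (x n + C (x n)) + x n) = -(C (x m) - C (x n))" by (simp add: algebra_simps)
    ultimately show ?thesis by (simp only: norm_minus_cancel)
  qed
  show False
  proof (rule compact_op_no_sep[OF C, of x 1 "1/2"])
    show "norm (x n) \<le> 1" for n using x(2) by simp
    show "1/2 \<le> norm (C (x m) - C (x n))" if mn: "m \<noteq> n" for m n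
    proof -
      consider "n < m" | "m < n" using mn by linarith
      then show ?thesis
      proof cases
        case 1
        from lt[of m n] lt[of n m] 1 show ?thesis using norm_sym_le by blast
      next
        case 2
        from lt[of m n] lt[of n m] 2 show ?thesis using norm_sym_le by blast
      qed
    qed
  qed simp
qed

lemma chain_desc:
  assumes C: "compact_op C"
    and Y: "\<And>n. subspace (Y n)" "\<And>n. closed (Y n)"
    and mono: "\<And>n. Y (Suc n) \<subseteq> Y n" and strict: "\<And>n. Y (Suc n) \<noteq> Y n"
    and A: "\<And>n x. x \<in> Y n \<Longrightarrow> x + C x \<in> Y (Suc n)"
  shows False
proof -
  have ex: "\<exists>x. x\<in>Y n \<and> norm x = 1 \<and> (\<forall>y\<in>Y (Suc n). 1/2 \<le> norm (x - y))" for n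
  proof -
    obtain v where "v \<in> Y n" "v \<notin> Y (Suc n)" using mono[of n] strict[of n] by blast
    then show ?thesis using riesz_lemma[OF Y(1)[of "Suc n"] Y(2)[of "Suc n"] Y(1)[of n] mono[of n]] by blast
  qed
  obtain x where xx: "\<forall>n. x n\<in>Y n \<and> norm (x n) = 1 \<and> (\<forall>y\<in>Y (Suc n). 1/2 \<le> norm (x n - y))"
    using choice[of "\<lambda>n x. x\<in>Y n \<and> norm x = 1 \<and> (\<forall>y\<in>Y (Suc n). 1/2 \<le> norm (x - y))"] ex by blast
  then have x: "\<And>n. x n \<in> Y n" "\<And>n. norm (x n) = 1"
    "\<And>n y. y \<in> Y (Suc n) \<Longrightarrow> 1/2 \<le> norm (x n - y)" by blast+
  have mle: "n \<le> m \<Longrightarrow> Y m \<subseteq> Y n" for n m using lift_Suc_antimono_le[of Y, OF mono] by blast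
  have lt: "1/2 \<le> norm (C (x n) - C (x m))" if "n < m" for m n
  proof -
    have "(x n + C (x n)) - (x m + C (x m)) + x m \<in> Y (Suc n)"
    proof -
      have "x n + C (x n) \<in> Y (Suc n)" using A x(1) by blast
      moreover have "x m + C (x m) \<in> Y (Suc n)" using A x(1) mle[of "Suc n" "Suc m"] that by auto
      moreover have "x m \<in> Y (Suc n)" using x(1)[of m] mle[of "Suc n" m] that by auto
      ultimately show ?thesis using Y(1)[of "Suc n"] by (blast intro: subspace_add subspace_diff)
    qed
    from x(3)[OF this] have "1/2 \<le> norm (x n - ((x n + C (x n)) - (x m + C (x m)) + x m))" .
    moreover have "x n - ((x n + C (x n)) - (x m + C (x m)) + x m) = -(C (x n) - C (x m))" by (simp add: algebra_simps)
    ultimately show ?thesis by (simp only: norm_minus_cancel)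
  qed
  show False
  proof (rule compact_op_no_sep[OF C, of x 1 "1/2"])
    show "norm (x n) \<le> 1" for n using x(2) by simp
    show "1/2 \<le> norm (C (x m) - C (x n))" if mn: "m \<noteq> n" for m n
    proof -
      consider "n < m" | "m < n" using mn by linarith
      then show ?thesis
      proof cases
        case 1
        from lt[of m n] lt[of n m] 1 show ?thesis using norm_sym_le by blast
      next
        case 2
        from lt[of m n] lt[of n m] 2 show ?thesis using norm_sym_le by blast
      qed
    qed
  qed simp
qed



lemma bl_I_plus: "bounded_linear D \<Longrightarrow> bounded_linear (\<lambda>x. x + D x)"
  using bounded_linear_add[OF bounded_linear_ident] by blast

lemma compact_op_power:
  assumes C: "compact_op C"
  shows "\<exists>D. compact_op D \<and> (\<forall>x. ((\<lambda>x. x + C x) ^^ n) x = x + D x)"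
proof (induction n)
  case 0 then show ?case using compact_op_zero by (intro exI[of _ "\<lambda>x. 0"]) simp
next
  case (Suc n)
  then obtain D where D: "compact_op D" "\<And>x. ((\<lambda>x. x + C x) ^^ n) x = x + D x" by blast
  have lC: "bounded_linear C" using C compact_op_linear by blast
  define D' where "D' = (\<lambda>x. D x + (C x + C (D x)))"
  have "compact_op D'" unfolding D'_def
    by (intro compact_op_add C D compact_op_compose_left[OF lC D(1)])
  moreover have "((\<lambda>x. x + C x) ^^ Suc n) x = x + D' x" for x
    using D(2)[of x] linear_add[OF bounded_linear.linear[OF lC]] by (simp add: D'_def algebra_simps)
  ultimately show ?case by blast
qed

lemma compact_bounded_below:
  fixes C :: "'a::real_normed_vector \<Rightarrow> 'a"
  assumes C: "compact_op C" and inj: "\<And>x. x + C x = 0 \<Longrightarrow> x = 0"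
  shows "\<exists>e>0. \<forall>x. e * norm x \<le> norm (x + C x)"
proof (rule ccontr)
  assume "\<not> ?thesis"
  then have "\<forall>n. \<exists>x. \<not> inverse (real (Suc n)) * norm x \<le> norm (x + C x)"
    by (metis inverse_positive_iff_positive of_nat_0_less_iff zero_less_Suc)
  then obtain x where x: "\<And>n. inverse (real (Suc n)) * norm (x n) > norm (x n + C (x n))"
    by (metis not_le)
  have lC: "bounded_linear C" using C compact_op_linear by blast
  note lin = bounded_linear.linear[OF lC]
  have xn0: "x n \<noteq> 0" for n using x[of n] by (auto simp: linear_0[OF lin])
  define u where "u n = (1 / norm (x n)) *\<^sub>R x n" for n
  have nu: "norm (u n) = 1" for n using xn0 unfolding u_def by simp
  have uC: "norm (u n + C (u n)) < inverse (real (Suc n))" for n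
  proof -
    have "u n + C (u n) = (1 / norm (x n)) *\<^sub>R (x n + C (x n))"
      unfolding u_def by (simp add: linear_scale[OF lin] algebra_simps)
    then have "norm (u n + C (u n)) = norm (x n + C (x n)) / norm (x n)" by simp
    also have "\<dots> < inverse (real (Suc n))" using x[of n] xn0 by (simp add: divide_less_eq)
    finally show ?thesis .
  qed
  have "bounded (range u)" using nu unfolding bounded_iff by (metis order_refl rangeE)
  then obtain c where c: "compact c" "C ` range u \<subseteq> c" using compact_op_bounded[OF C] by blast
  then have "\<forall>n. (C \<circ> u) n \<in> c" by auto
  moreover have "seq_compact c" using c(1) compact_imp_seq_compact by blast
  ultimately obtain l s where s: "strict_mono (s::nat\<Rightarrow>nat)" "((C \<circ> u) \<circ> s) \<longlonglongrightarrow> l"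
    unfolding seq_compact_def by blast
  have z: "(\<lambda>n. u (s n) + C (u (s n))) \<longlonglongrightarrow> 0"
  proof (rule Lim_null_comparison)
    show "\<forall>\<^sub>F n in sequentially. norm (u (s n) + C (u (s n))) \<le> inverse (real (Suc n))"
    proof (intro always_eventually allI)
      fix n
      have "n \<le> s n" using seq_suble[OF s(1)] .
      then have "inverse (real (Suc (s n))) \<le> inverse (real (Suc n))" by (simp add: le_imp_inverse_le)
      then show "norm (u (s n) + C (u (s n))) \<le> inverse (real (Suc n))" using uC[of "s n"] by linarith
    qed
    show "(\<lambda>n. inverse (real (Suc n))) \<longlonglongrightarrow> 0" by (rule LIMSEQ_inverse_real_of_nat)
  qed
  have Cs: "(\<lambda>n. C (u (s n))) \<longlonglongrightarrow> l" using s(2) by (simp add: comp_def)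
  have us: "(\<lambda>n. u (s n)) \<longlonglongrightarrow> 0 - l"
  proof -
    have "(\<lambda>n. (u (s n) + C (u (s n))) - C (u (s n))) \<longlonglongrightarrow> 0 - l" by (intro tendsto_diff z Cs)
    then show ?thesis by simp
  qed
  have "(\<lambda>n. u (s n) + C (u (s n))) \<longlonglongrightarrow> (0 - l) + C (0 - l)"
    by (intro tendsto_add us bounded_linear.tendsto[OF lC])
  then have "(0 - l) + C (0 - l) = 0" using z LIMSEQ_unique by blast
  then have "0 - l = 0" by (rule inj)
  then have "(\<lambda>n. norm (u (s n))) \<longlonglongrightarrow> norm (0::'a)" using us tendsto_norm by fastforce
  moreover have "(\<lambda>n. norm (u (s n))) \<longlonglongrightarrow> 1" using nu by simp
  ultimately show False using LIMSEQ_unique by fastforce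
qed

lemma closed_range_bb:
  fixes A :: "'a::banach \<Rightarrow> 'a"
  assumes "bounded_linear A" "e > 0" "\<And>x. e * norm x \<le> norm (A x)"
  shows "closed (range A)"
proof -
  have "complete (A ` UNIV)"
    using complete_isometric_image[OF assms(2) subspace_UNIV assms(1)] assms(3) complete_UNIV by blast
  then show ?thesis using complete_imp_closed by blast
qed

lemma fredholm_inj_surj:
  fixes C :: "'a::banach \<Rightarrow> 'a"
  assumes C: "compact_op C" and inj: "\<And>x. x + C x = 0 \<Longrightarrow> x = 0"
  shows "surj (\<lambda>x. x + C x)"
proof (rule ccontr)
  assume ns: "\<not> surj (\<lambda>x. x + C x)"
  define A where "A = (\<lambda>x. x + C x)"
  have lC: "bounded_linear C" using C compact_op_linear by blast
  have lA: "bounded_linear A" unfolding A_def using bl_I_plus[OF lC] .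
  have injA: "inj A" unfolding inj_on_def A_def
  proof (intro ballI impI)
    fix x y assume eq: "x + C x = y + C y"
    have cd: "C (x - y) = C x - C y" using linear_diff[OF bounded_linear.linear[OF lC]] .
    have "(x - y) + C (x - y) = (x + C x) - (y + C y)" unfolding cd by (simp add: algebra_simps)
    also have "\<dots> = 0" using eq by simp
    finally have "(x - y) + C (x - y) = 0" .
    then have "x - y = 0" by (rule inj)
    then show "x = y" by simp
  qed
  define Y where "Y n = range (A ^^ n)" for n
  have pw: "\<exists>D. compact_op D \<and> (\<forall>x. (A ^^ n) x = x + D x)" for n
    unfolding A_def using compact_op_power[OF C] by blast
  have Ysub: "subspace (Y n)" for n
  proof -
    obtain D where D: "compact_op D" "\<And>x. (A ^^ n) x = x + D x" using pw by blast
    have "A ^^ n = (\<lambda>x. x + D x)" using D(2) by auto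
    moreover have "linear (\<lambda>x. x + D x)" using D(1) compact_op_linear
      by (intro linear_compose_add linear_ident) (auto intro: bounded_linear.linear)
    ultimately show ?thesis unfolding Y_def by (metis linear_subspace_image subspace_UNIV)
  qed
  have Ycl: "closed (Y n)" for n
  proof -
    obtain D where D: "compact_op D" "\<And>x. (A ^^ n) x = x + D x" using pw by blast
    have lD: "bounded_linear D" using D(1) compact_op_linear by blast
    have D0: "D 0 = 0" using linear_0[OF bounded_linear.linear[OF lD]] .
    have injn: "inj (A ^^ n)" using injA by simp
    have "x = 0" if "x + D x = 0" for x
    proof -
      have "(A ^^ n) x = (A ^^ n) 0" using D(2)[of x] D(2)[of 0] D0 that by simp
      then show ?thesis using injD[OF injn] by blast
    qed
    then obtain e where e: "e > 0" "\<And>x. e * norm x \<le> norm (x + D x)"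
      using compact_bounded_below[OF D(1)] by blast
    have "A ^^ n = (\<lambda>x. x + D x)" using D(2) by auto
    moreover have "closed (range (\<lambda>x. x + D x))"
      using bl_I_plus[OF lD] e by (intro closed_range_bb[OF _ e(1)]) auto
    ultimately show ?thesis unfolding Y_def by simp
  qed
  have mono: "Y (Suc n) \<subseteq> Y n" for n
  proof
    fix y assume "y \<in> Y (Suc n)"
    then obtain w where "y = (A ^^ Suc n) w" unfolding Y_def by blast
    then have "y = (A ^^ n) (A w)" by (simp only: funpow_Suc_right comp_apply)
    then show "y \<in> Y n" unfolding Y_def by blast
  qed
  have strict: "Y (Suc n) \<noteq> Y n" for n
  proof
    assume eq: "Y (Suc n) = Y n"
    obtain y where y: "y \<notin> range A" using ns unfolding A_def by blast
    have "(A ^^ n) y \<in> Y (Suc n)" using eq unfolding Y_def by auto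
    then obtain z where "(A ^^ n) y = (A ^^ Suc n) z" unfolding Y_def by blast
    then have "(A ^^ n) y = (A ^^ n) (A z)" by (simp only: funpow_Suc_right comp_apply)
    then have "y = A z" using injD[OF inj_fn[OF injA, of n]] by blast
    then show False using y by blast
  qed
  have step: "x + C x \<in> Y (Suc n)" if xY: "x \<in> Y n" for n x
  proof -
    obtain w where "x = (A ^^ n) w" using xY unfolding Y_def by blast
    then have "x + C x = (A ^^ Suc n) w" unfolding A_def by simp
    then show ?thesis unfolding Y_def by blast
  qed
  show False using chain_desc[where C=C and Y=Y, OF C Ysub Ycl mono strict step] .
qed

lemma fredholm_surj_inj:
  fixes C :: "'a::banach \<Rightarrow> 'a"
  assumes C: "compact_op C" and su: "surj (\<lambda>x. x + C x)" and u: "u + C u = 0"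
  shows "u = 0"
proof (rule ccontr)
  assume u0: "u \<noteq> 0"
  define A where "A = (\<lambda>x. x + C x)"
  have lC: "bounded_linear C" using C compact_op_linear by blast
  have lA: "bounded_linear A" unfolding A_def using bl_I_plus[OF lC] .
  have A0: "A 0 = 0" using linear_0[OF bounded_linear.linear[OF lA]] .
  define Y where "Y n = {x. (A ^^ n) x = 0}" for n
  have pw: "\<exists>D. compact_op D \<and> (\<forall>x. (A ^^ n) x = x + D x)" for n
    unfolding A_def using compact_op_power[OF C] by blast
  have lin_n: "bounded_linear (A ^^ n)" for n
  proof -
    obtain D where D: "compact_op D" "\<And>x. (A ^^ n) x = x + D x" using pw by blast
    have "A ^^ n = (\<lambda>x. x + D x)" using D(2) by auto
    then show ?thesis using bl_I_plus[OF compact_op_linear[OF D(1)]] by simp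
  qed
  have Ysub: "subspace (Y n)" for n
  proof -
    note ln = bounded_linear.linear[OF lin_n[of n]]
    show ?thesis unfolding Y_def subspace_def by (simp add: linear_0[OF ln] linear_add[OF ln] linear_scale[OF ln])
  qed
  have Ycl: "closed (Y n)" for n
    unfolding Y_def using lin_n[of n]
    by (intro closed_Collect_eq linear_continuous_on continuous_on_const) auto
  have mono: "Y n \<subseteq> Y (Suc n)" for n
    unfolding Y_def using A0 by auto
  have strict: "Y (Suc n) \<noteq> Y n" for n
  proof -
    have "surj (A ^^ n)" using su unfolding A_def by simp
    then obtain x where x: "(A ^^ n) x = u" by (metis surjD)
    have "(A ^^ Suc n) x = 0" using x u unfolding A_def by simp
    then show ?thesis using x u0 unfolding Y_def by auto
  qed
  have step: "x + C x \<in> Y n" if "x \<in> Y (Suc n)" for n x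
    using that unfolding Y_def A_def by (simp add: funpow_Suc_right del: funpow.simps)
  show False using chain_asc[where C=C and Y=Y, OF C Ysub Ycl mono strict step] .
qed



lemma closed_span_insert:
  fixes Y :: "'a::real_normed_vector set"
  assumes Y: "subspace Y" "closed Y"
  shows "closed (span (insert b Y))"
proof (cases "b \<in> Y")
  case True
  then have "span (insert b Y) = span Y" using span_redundant span_superset by blast
  also have "\<dots> = Y" using Y(1) by simp
  finally show ?thesis using Y(2) by simp
next
  case False
  obtain f :: "'a \<Rightarrow> real" where f: "bounded_linear f" "\<forall>y\<in>Y. f y = 0" "f b = 1"
    using hb_sep[OF Y False] by blast
  note lf = bounded_linear.linear[OF f(1)]
  have sY: "span Y = Y" using Y(1) by simp
  have eq: "span (insert b Y) = (\<lambda>x. x - f x *\<^sub>R b) -` Y"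
  proof
    show "span (insert b Y) \<subseteq> (\<lambda>x. x - f x *\<^sub>R b) -` Y"
    proof
      fix x assume "x \<in> span (insert b Y)"
      then obtain k where k: "x - k *\<^sub>R b \<in> Y" using Y(1) by (auto simp: span_insert sY)
      then have "f (x - k *\<^sub>R b) = 0" using f(2) by blast
      then have "f x = k" using f(3) by (simp add: linear_diff[OF lf] linear_scale[OF lf])
      then show "x \<in> (\<lambda>x. x - f x *\<^sub>R b) -` Y" using k by simp
    qed
    show "(\<lambda>x. x - f x *\<^sub>R b) -` Y \<subseteq> span (insert b Y)"
      using Y(1) by (auto simp: span_insert sY)
  qed
  have bl: "bounded_linear (\<lambda>x. x - f x *\<^sub>R b)"
    using bounded_linear_sub[OF bounded_linear_ident bounded_linear_compose[OF bounded_linear_scaleR_left[of b] f(1)]]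
    by simp
  show ?thesis unfolding eq
    by (rule continuous_closed_vimage[OF Y(2)]) (rule linear_continuous_at[OF bl])
qed

lemma closed_span_finite:
  fixes B :: "'a::real_normed_vector set"
  assumes "finite B"
  shows "closed (span B)"
  using assms
proof (induction B rule: finite_induct)
  case empty then show ?case by simp
next
  case (insert b B)
  have "span (insert b B) = span (insert b (span B))"
    by (simp only: span_insert span_span)
  then show ?case using closed_span_insert[OF subspace_span insert.IH] by simp
qed

primrec bseq :: "('a set \<Rightarrow> 'a) \<Rightarrow> nat \<Rightarrow> 'a set" where
  "bseq g 0 = {}"
| "bseq g (Suc n) = insert (g (bseq g n)) (bseq g n)"

lemma finite_kernel:
  fixes C :: "'a::real_normed_vector \<Rightarrow> 'a"
  assumes C: "compact_op C"
  shows "\<exists>B. finite B \<and> B \<subseteq> {x. x + C x = 0} \<and> {x. x + C x = 0} \<subseteq> span B"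
proof (rule ccontr)
  define N where "N = {x. x + C x = 0}"
  assume "\<not> ?thesis"
  then have ex: "\<exists>v. v \<in> N \<and> v \<notin> span B" if "finite B" "B \<subseteq> N" for B
    using that unfolding N_def by blast
  define g where "g B = (SOME v. v \<in> N \<and> v \<notin> span B)" for B
  have g: "g B \<in> N \<and> g B \<notin> span B" if "finite B" "B \<subseteq> N" for B
    unfolding g_def using someI_ex[OF ex[OF that]] .
  have fin: "finite (bseq g n) \<and> bseq g n \<subseteq> N" for n
    by (induction n) (use g in auto)
  have lC: "linear C" using compact_op_linear[OF C] bounded_linear.linear by blast
  have sN: "subspace N" unfolding N_def subspace_def
    by (simp add: linear_0[OF lC] linear_add[OF lC] linear_scale[OF lC] algebra_simps)
       (metis scaleR_right_distrib scaleR_zero_right)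
  define Y where "Y n = span (bseq g n)" for n
  have Ysub: "subspace (Y n)" for n unfolding Y_def by simp
  have Ycl: "closed (Y n)" for n unfolding Y_def using fin[of n] by (intro closed_span_finite) blast
  have mono: "Y n \<subseteq> Y (Suc n)" for n unfolding Y_def by (simp add: span_mono subset_insertI)
  have strict: "Y (Suc n) \<noteq> Y n" for n
  proof -
    have "g (bseq g n) \<in> Y (Suc n)" unfolding Y_def by (simp add: span_base)
    moreover have "g (bseq g n) \<notin> Y n" unfolding Y_def using g fin by blast
    ultimately show ?thesis by blast
  qed
  have step: "x + C x \<in> Y n" if xY: "x \<in> Y (Suc n)" for n x
  proof -
    have "Y (Suc n) \<subseteq> N" unfolding Y_def using fin[of "Suc n"] sN by (simp add: span_minimal)
    then have "x + C x = 0" using xY unfolding N_def by blast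
    then show ?thesis unfolding Y_def by (simp add: span_zero)
  qed
  show False using chain_asc[where C=C and Y=Y, OF C Ysub Ycl mono strict step] .
qed

lemma biorth:
  fixes B :: "'a::real_normed_vector set"
  assumes "finite B"
  shows "\<exists>n (e::nat \<Rightarrow> 'a) (f::nat \<Rightarrow> 'a \<Rightarrow> real). (\<forall>i<n. e i \<in> span B) \<and> (\<forall>i<n. bounded_linear (f i))
     \<and> (\<forall>i<n. \<forall>j<n. f i (e j) = (if i = j then 1 else 0)) \<and> (\<forall>x\<in>span B. x = (\<Sum>i<n. f i x *\<^sub>R e i))"
  using assms
proof (induction B rule: finite_induct)
  case empty
  show ?case by (intro exI[of _ 0] exI[of _ "\<lambda>i. 0"] exI[of _ "\<lambda>i x. 0"] conjI) auto
next
  case (insert b B)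
  then obtain n and e :: "nat \<Rightarrow> 'a" and f :: "nat \<Rightarrow> 'a \<Rightarrow> real" where
    e: "\<forall>i<n. e i \<in> span B" and f: "\<forall>i<n. bounded_linear (f i)"
    and bo: "\<forall>i<n. \<forall>j<n. f i (e j) = (if i = j then 1 else 0)"
    and rep: "\<forall>x\<in>span B. x = (\<Sum>i<n. f i x *\<^sub>R e i)" by blast
  show ?case
  proof (cases "b \<in> span B")
    case True
    then have sp: "span (insert b B) = span B" by (rule span_redundant)
    show ?thesis unfolding sp by (intro exI[of _ n] exI[of _ e] exI[of _ f] conjI; fact)
  next
    case False
    obtain g :: "'a \<Rightarrow> real" where g: "bounded_linear g" "\<forall>y\<in>span B. g y = 0" "g b = 1"
      using hb_sep[OF subspace_span closed_span_finite[OF insert.hyps(1)] False] by blast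
    note lg = bounded_linear.linear[OF g(1)]
    define e' where "e' = e(n := b)"
    define f' where "f' i = (if i < n then (\<lambda>x. f i x - f i b * g x) else g)" for i
    have ge: "g (e i) = 0" if "i < n" for i using g(2) e that by blast
    have A: "\<forall>i<Suc n. e' i \<in> span (insert b B)"
    proof (intro allI impI)
      fix i assume "i < Suc n"
      show "e' i \<in> span (insert b B)"
      proof (cases "i < n")
        case True
        then have "e' i = e i" unfolding e'_def by simp
        then show ?thesis using e True span_mono[of B "insert b B"] by auto
      next
        case False
        then have "i = n" using \<open>i < Suc n\<close> by simp
        then have "e' i = b" unfolding e'_def by simp
        then show ?thesis by (simp add: span_base)
      qed
    qed
    have Bf: "\<forall>i<Suc n. bounded_linear (f' i)"
    proof (intro allI impI)
      fix i assume "i < Suc n"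
      show "bounded_linear (f' i)"
      proof (cases "i < n")
        case True
        have "bounded_linear (\<lambda>x. f i x - f i b * g x)"
          using f True g(1) by (intro bounded_linear_sub bounded_linear_const_mult) auto
        then show ?thesis unfolding f'_def using True by simp
      next
        case False
        then show ?thesis unfolding f'_def using g(1) by simp
      qed
    qed
    have Cb: "\<forall>i<Suc n. \<forall>j<Suc n. f' i (e' j) = (if i = j then 1 else 0)"
    proof (intro allI impI)
      fix i j assume i: "i < Suc n" and j: "j < Suc n"
      show "f' i (e' j) = (if i = j then 1 else 0)"
      proof (cases "i < n")
        case True
        show ?thesis
        proof (cases "j < n")
          case True
          then show ?thesis using \<open>i < n\<close> bo ge unfolding f'_def e'_def by simp
        next
          case False
          then have "j = n" using j by simp
          then show ?thesis using \<open>i < n\<close> g(3) unfolding f'_def e'_def by simp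
        qed
      next
        case False
        then have "i = n" using i by simp
        show ?thesis
        proof (cases "j < n")
          case True
          then show ?thesis using \<open>i = n\<close> ge unfolding f'_def e'_def by simp
        next
          case False
          then have "j = n" using j by simp
          then show ?thesis using \<open>i = n\<close> g(3) unfolding f'_def e'_def by simp
        qed
      qed
    qed
    have R: "\<forall>x\<in>span (insert b B). x = (\<Sum>i<Suc n. f' i x *\<^sub>R e' i)"
    proof
      fix x assume "x \<in> span (insert b B)"
      then obtain k where k: "x - k *\<^sub>R b \<in> span B" by (auto simp: span_insert)
      define y where "y = x - k *\<^sub>R b"
      have xy: "x = y + k *\<^sub>R b" unfolding y_def by simp
      have gy: "g y = 0" using g(2) k unfolding y_def by blast
      have gx: "g x = k" unfolding xy using gy g(3)
        by (simp add: linear_add[OF lg] linear_scale[OF lg])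
      have fi: "f' i x = f i y" if "i < n" for i
      proof -
        have lfi: "linear (f i)" using f that bounded_linear.linear by blast
        have "f i x = f i y + k * f i b" unfolding xy
          by (simp add: linear_add[OF lfi] linear_scale[OF lfi])
        then show ?thesis unfolding f'_def using that gx by simp
      qed
      have "(\<Sum>i<Suc n. f' i x *\<^sub>R e' i) = (\<Sum>i<n. f' i x *\<^sub>R e' i) + f' n x *\<^sub>R e' n" by simp
      also have "(\<Sum>i<n. f' i x *\<^sub>R e' i) = (\<Sum>i<n. f i y *\<^sub>R e i)"
        by (rule sum.cong) (auto simp: fi e'_def)
      also have "\<dots> = y"
      proof -
        have yB: "y \<in> span B" using k unfolding y_def .
        have "y = (\<Sum>i<n. f i y *\<^sub>R e i)" using rep yB by blast
        then show ?thesis by (rule sym)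
      qed
      also have "f' n x *\<^sub>R e' n = k *\<^sub>R b" unfolding f'_def e'_def using gx by simp
      finally show "x = (\<Sum>i<Suc n. f' i x *\<^sub>R e' i)" using xy by simp
    qed
    show ?thesis by (intro exI[of _ "Suc n"] exI[of _ e'] exI[of _ f'] conjI; fact)
  qed
qed

lemma finite_codim_trans:
  assumes "finite_codim_in A B" "finite_codim_in B C" "A \<subseteq> B" "B \<subseteq> C"
  shows "finite_codim_in A C"
proof -
  obtain S1 where S1: "finite S1" "S1 \<subseteq> B" "B \<subseteq> span (A \<union> S1)" using assms(1) unfolding finite_codim_in_def by blast
  obtain S2 where S2: "finite S2" "S2 \<subseteq> C" "C \<subseteq> span (B \<union> S2)" using assms(2) unfolding finite_codim_in_def by blast
  have "B \<union> S2 \<subseteq> span (A \<union> (S1 \<union> S2))"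
  proof -
    have "span (A \<union> S1) \<subseteq> span (A \<union> (S1 \<union> S2))" by (rule span_mono) blast
    moreover have "S2 \<subseteq> span (A \<union> (S1 \<union> S2))" using span_superset[of "A \<union> (S1 \<union> S2)"] by blast
    ultimately show ?thesis using S1(3) by blast
  qed
  then have "span (B \<union> S2) \<subseteq> span (A \<union> (S1 \<union> S2))" by (rule span_minimal) simp
  then have "C \<subseteq> span (A \<union> (S1 \<union> S2))" using S2(3) by blast
  moreover have "S1 \<union> S2 \<subseteq> C" using S1(2) S2(2) assms(4) by blast
  ultimately show ?thesis unfolding finite_codim_in_def using S1(1) S2(1) by blast
qed

lemma finite_codim_one:
  fixes h :: "'a::real_vector \<Rightarrow> real"
  assumes L: "subspace L" and h: "linear h"
  shows "finite_codim_in (L \<inter> {x. h x = 0}) L"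
proof (cases "\<exists>s\<in>L. h s \<noteq> 0")
  case True
  then obtain s where s: "s \<in> L" "h s \<noteq> 0" by blast
  define s0 where "s0 = (1 / h s) *\<^sub>R s"
  have s0: "s0 \<in> L" "h s0 = 1" using s L unfolding s0_def by (auto simp: subspace_scale linear_scale[OF h])
  have "L \<subseteq> span ((L \<inter> {x. h x = 0}) \<union> {s0})"
  proof
    fix x assume x: "x \<in> L"
    have "x - h x *\<^sub>R s0 \<in> L \<inter> {x. h x = 0}"
      using x s0 L by (simp add: subspace_diff subspace_scale linear_diff[OF h] linear_scale[OF h])
    then have a: "x - h x *\<^sub>R s0 \<in> span ((L \<inter> {x. h x = 0}) \<union> {s0})" by (simp add: span_base)
    have b: "h x *\<^sub>R s0 \<in> span ((L \<inter> {x. h x = 0}) \<union> {s0})" by (simp add: span_base span_scale)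
    have "x = (x - h x *\<^sub>R s0) + h x *\<^sub>R s0" by simp
    then show "x \<in> span ((L \<inter> {x. h x = 0}) \<union> {s0})" using span_add[OF a b] by simp
  qed
  then show ?thesis unfolding finite_codim_in_def using s0(1) by (intro exI[of _ "{s0}"]) auto
next
  case False
  then have "L \<inter> {x. h x = 0} = L" by blast
  then show ?thesis unfolding finite_codim_in_def by (intro exI[of _ "{}"]) (auto intro: span_base)
qed

lemma finite_codim_kernels:
  fixes f :: "nat \<Rightarrow> 'a::real_vector \<Rightarrow> real"
  assumes L: "subspace L" and f: "\<And>i. i < n \<Longrightarrow> linear (f i)"
  shows "finite_codim_in (L \<inter> {x. \<forall>i<n. f i x = 0}) L \<and> subspace (L \<inter> {x. \<forall>i<n. f i x = 0})"
  using f
proof (induction n)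
  case 0
  then show ?case using L unfolding finite_codim_in_def by (auto intro!: exI[of _ "{}"] span_base)
next
  case (Suc n)
  define L' where "L' = L \<inter> {x. \<forall>i<n. f i x = 0}"
  have "\<And>i. i < n \<Longrightarrow> linear (f i)" using Suc.prems by simp
  from Suc.IH[OF this] have IH: "finite_codim_in L' L" "subspace L'" unfolding L'_def by auto
  have eq: "L \<inter> {x. \<forall>i<Suc n. f i x = 0} = L' \<inter> {x. f n x = 0}"
    unfolding L'_def by (auto simp: less_Suc_eq)
  have ln: "linear (f n)" using Suc.prems by simp
  have sk: "subspace {x. f n x = 0}" unfolding subspace_def
    by (simp add: linear_0[OF ln] linear_add[OF ln] linear_scale[OF ln])
  have "finite_codim_in (L' \<inter> {x. f n x = 0}) L'" by (rule finite_codim_one[OF IH(2) ln])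
  moreover have "L' \<inter> {x. f n x = 0} \<subseteq> L'" by blast
  moreover have "L' \<subseteq> L" unfolding L'_def by blast
  ultimately have "finite_codim_in (L' \<inter> {x. f n x = 0}) L"
    using finite_codim_trans IH(1) by blast
  moreover have "subspace (L' \<inter> {x. f n x = 0})" using IH(2) sk by (rule subspace_inter)
  ultimately show ?case unfolding eq by blast
qed



lemma span_sub_eq: "subspace Y \<Longrightarrow> span Y = Y" by simp

lemma back_extend:
  fixes S :: "'a::real_normed_vector set"
  assumes "finite S" "subspace Y" "closed Y" "compact_op K" "\<forall>y\<in>Y. y + K y \<in> M" "subspace M"
  shows "\<exists>K'. compact_op K' \<and> (\<forall>x\<in>span (Y \<union> S). x + K' x \<in> M)"
  using assms
proof (induction S arbitrary: Y K rule: finite_induct)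
  case empty
  show ?case using empty.prems by (auto simp: span_sub_eq)
next
  case (insert s S)
  note Y = insert.prems(1,2) and K = insert.prems(3) and YM = insert.prems(4) and sM = insert.prems(5)
  have lK: "linear K" using compact_op_linear[OF K] bounded_linear.linear by blast
  define Y' where "Y' = span (insert s Y)"
  have Y'sub: "subspace Y'" unfolding Y'_def by simp
  have Y'cl: "closed Y'" unfolding Y'_def by (rule closed_span_insert[OF Y])
  have sY: "span Y = Y" using Y(1) by simp
  have "\<exists>K''. compact_op K'' \<and> (\<forall>x\<in>Y'. x + K'' x \<in> M)"
  proof (cases "s \<in> Y")
    case True
    then have "Y' = Y" unfolding Y'_def using span_redundant[of s Y] span_superset sY by simp
    then show ?thesis using K YM by auto
  next
    case False
    obtain f :: "'a \<Rightarrow> real" where f: "bounded_linear f" "\<forall>y\<in>Y. f y = 0" "f s = 1"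
      using hb_sep[OF Y False] by blast
    note lf = bounded_linear.linear[OF f(1)]
    define w where "w = - (s + K s)"
    define K'' where "K'' = (\<lambda>x. K x + f x *\<^sub>R w)"
    have "compact_op K''" unfolding K''_def by (intro compact_op_add K compact_op_rank1 f(1))
    moreover have "x + K'' x \<in> M" if x: "x \<in> Y'" for x
    proof -
      obtain c where c: "x - c *\<^sub>R s \<in> Y" using x unfolding Y'_def by (auto simp: span_insert sY)
      define y where "y = x - c *\<^sub>R s"
      have xy: "x = y + c *\<^sub>R s" unfolding y_def by simp
      have yY: "y \<in> Y" using c unfolding y_def .
      have fx: "f x = c" unfolding xy using f(2) yY f(3) by (simp add: linear_add[OF lf] linear_scale[OF lf])
      have "x + K'' x = y + K y" unfolding K''_def fx unfolding xy w_def
        by (simp add: linear_add[OF lK] linear_scale[OF lK] algebra_simps)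
      then show ?thesis using YM yY by simp
    qed
    ultimately show ?thesis by blast
  qed
  then obtain K'' where K'': "compact_op K''" "\<forall>x\<in>Y'. x + K'' x \<in> M" by blast
  from insert.IH[OF Y'sub Y'cl K''(1) K''(2) sM]
  obtain K' where K': "compact_op K'" "\<forall>x\<in>span (Y' \<union> S). x + K' x \<in> M" by blast
  have "span (Y \<union> insert s S) \<subseteq> span (Y' \<union> S)"
  proof (rule span_mono)
    have "Y \<subseteq> Y'" "s \<in> Y'" unfolding Y'_def by (auto intro: span_base)
    then show "Y \<union> insert s S \<subseteq> Y' \<union> S" by blast
  qed
  then show ?case using K' by blast
qed

lemma backward:
  fixes L M :: "'a::banach set"
  assumes M: "closed_subspace M"
    and h: "\<exists>L1 M1 K1. closed_subspace L1 \<and> L1 \<subseteq> L \<and> closed_subspace M1 \<and> M1 \<subseteq> M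
              \<and> compact_op K1 \<and> finite_codim_in L1 L \<and> (\<lambda>x. x + K1 x) ` L1 = M1"
  shows "sc_equiv L M"
proof -
  obtain L1 M1 K1 where L1: "closed_subspace L1" and M1: "M1 \<subseteq> M" and K1: "compact_op K1"
    and fc: "finite_codim_in L1 L" and im: "(\<lambda>x. x + K1 x) ` L1 = M1" using h by blast
  obtain S where S: "finite S" "S \<subseteq> L" "L \<subseteq> span (L1 \<union> S)" using fc unfolding finite_codim_in_def by blast
  have "\<forall>y\<in>L1. y + K1 y \<in> M" using im M1 by blast
  from back_extend[OF S(1) _ _ K1 this] L1 M
  obtain K' where K': "compact_op K'" "\<forall>x\<in>span (L1 \<union> S). x + K' x \<in> M"
    unfolding closed_subspace_def by blast
  then show ?thesis unfolding sc_equiv_def using S(3) by blast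
qed



lemma choose_w:
  fixes K :: "'a::banach \<Rightarrow> 'a" and f :: "nat \<Rightarrow> 'a \<Rightarrow> real"
  assumes K: "compact_op K"
   and f: "\<forall>i<n. bounded_linear (f i)" and e: "\<forall>i<n. e i + K (e i) = 0"
   and bo: "\<forall>i<n. \<forall>j<n. f i (e j) = (if i = j then 1 else 0)"
  shows "j \<le> n \<Longrightarrow> \<exists>w::nat\<Rightarrow>'a. \<forall>c. (\<Sum>i<j. c i *\<^sub>R w i) \<in> range (\<lambda>x. x + K x) \<longrightarrow> (\<forall>i<j. c i = 0)"
proof (induction j)
  case 0 then show ?case by simp
next
  case (Suc j)
  then obtain w :: "nat \<Rightarrow> 'a" where w: "\<And>c. (\<Sum>i<j. c i *\<^sub>R w i) \<in> range (\<lambda>x. x + K x) \<Longrightarrow> (\<forall>i<j. c i = 0)"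
    by auto
  have jn: "j < n" using Suc.prems by simp
  have lK: "linear K" using compact_op_linear[OF K] bounded_linear.linear by blast
  define T where "T = (\<lambda>x. x + K x)"
  have lT: "linear T" unfolding T_def using lK by (simp add: linear_compose_add linear_ident)
  have lf: "linear (f i)" if "i < n" for i using f that bounded_linear.linear by blast
  have Te: "T (e i) = 0" if "i < n" for i using e that unfolding T_def by blast
  define R where "R = {t + (\<Sum>i<j. c i *\<^sub>R w i) | t c. t \<in> range T}"
  show ?case
  proof (cases "\<exists>v. v \<notin> R")
    case True
    then obtain v where v: "v \<notin> R" by blast
    define w' where "w' = w(j := v)"
    have "\<forall>i<Suc j. c i = 0" if h: "(\<Sum>i<Suc j. c i *\<^sub>R w' i) \<in> range T" for c
    proof -
      have sw: "(\<Sum>i<Suc j. c i *\<^sub>R w' i) = (\<Sum>i<j. c i *\<^sub>R w i) + c j *\<^sub>R v"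
      proof -
        have "(\<Sum>i<j. c i *\<^sub>R w' i) = (\<Sum>i<j. c i *\<^sub>R w i)"
          by (rule sum.cong) (auto simp: w'_def)
        then show ?thesis by (simp add: w'_def)
      qed
      obtain z where z: "T z = (\<Sum>i<j. c i *\<^sub>R w i) + c j *\<^sub>R v" using h unfolding sw by auto
      have cj: "c j = 0"
      proof (rule ccontr)
        assume cj: "c j \<noteq> 0"
        have "v = T ((1 / c j) *\<^sub>R z) + (\<Sum>i<j. (- c i / c j) *\<^sub>R w i)"
        proof -
          have "T ((1 / c j) *\<^sub>R z) = (1 / c j) *\<^sub>R ((\<Sum>i<j. c i *\<^sub>R w i) + c j *\<^sub>R v)"
            using z by (simp add: linear_scale[OF lT])
          also have "\<dots> = (\<Sum>i<j. (c i / c j) *\<^sub>R w i) + v"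
            using cj by (simp add: scaleR_add_right scaleR_sum_right)
          finally have "T ((1 / c j) *\<^sub>R z) = (\<Sum>i<j. (c i / c j) *\<^sub>R w i) + v" .
          moreover have "(\<Sum>i<j. (- c i / c j) *\<^sub>R w i) = - (\<Sum>i<j. (c i / c j) *\<^sub>R w i)"
            by (simp add: sum_negf[symmetric])
          ultimately show ?thesis by simp
        qed
        then have "\<exists>t c'. v = t + (\<Sum>i<j. c' i *\<^sub>R w i) \<and> t \<in> range T"
          by (intro exI[of _ "T ((1 / c j) *\<^sub>R z)"] exI[of _ "\<lambda>i. - c i / c j"]) auto
        then have "v \<in> R" unfolding R_def by blast
        then show False using v by blast
      qed
      have "(\<Sum>i<j. c i *\<^sub>R w i) \<in> range T" using z cj by (metis add.right_neutral rangeI scaleR_zero_left)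
      then have "\<forall>i<j. c i = 0" using w unfolding T_def by blast
      then show ?thesis using cj less_Suc_eq by auto
    qed
    then show ?thesis unfolding T_def by blast
  next
    case False
    then have allR: "v \<in> R" for v by blast
    define F where "F x = (\<Sum>i<j. f i x *\<^sub>R w i)" for x
    define C where "C x = K x + F x" for x
    have cF: "compact_op F" unfolding F_def
      using f jn by (intro compact_op_sum compact_op_rank1) auto
    have cC: "compact_op C" unfolding C_def using K cF by (rule compact_op_add)
    have su: "surj (\<lambda>x. x + C x)"
    proof -
      have "v \<in> range (\<lambda>x. x + C x)" for v
      proof -
        obtain z c where vz: "v = T z + (\<Sum>i<j. c i *\<^sub>R w i)" using allR[of v] unfolding R_def by blast
        define x where "x = z + (\<Sum>l<j. (c l - f l z) *\<^sub>R e l)"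
        have Tx: "T x = T z"
        proof -
          have "T (\<Sum>l<j. (c l - f l z) *\<^sub>R e l) = (\<Sum>l<j. (c l - f l z) *\<^sub>R T (e l))"
            by (simp add: linear_sum[OF lT] linear_scale[OF lT])
          also have "\<dots> = 0" using Te jn by (intro sum.neutral) auto
          finally show ?thesis unfolding x_def by (simp add: linear_add[OF lT])
        qed
        have fx: "f i x = c i" if i: "i < j" for i
        proof -
          have lfi: "linear (f i)" using lf i jn by simp
          have "f i (\<Sum>l<j. (c l - f l z) *\<^sub>R e l) = (\<Sum>l<j. (c l - f l z) * f i (e l))"
            by (simp add: linear_sum[OF lfi] linear_scale[OF lfi])
          also have "\<dots> = (\<Sum>l<j. if i = l then c l - f l z else 0)"
            using bo i jn by (intro sum.cong) auto
          also have "\<dots> = c i - f i z" using i by simp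
          finally show ?thesis unfolding x_def by (simp add: linear_add[OF lfi])
        qed
        have "x + C x = T x + F x" unfolding C_def T_def by simp
        also have "F x = (\<Sum>i<j. c i *\<^sub>R w i)" unfolding F_def by (rule sum.cong) (auto simp: fx)
        finally have "x + C x = v" using Tx vz by simp
        then show ?thesis by (metis rangeI)
      qed
      then show ?thesis by blast
    qed
    have "e j + C (e j) = 0"
    proof -
      have "F (e j) = 0" unfolding F_def using bo jn by (intro sum.neutral) auto
      then show ?thesis unfolding C_def using e jn by (simp add: add.assoc)
    qed
    then have "e j = 0" by (rule fredholm_surj_inj[OF cC su])
    moreover have "f j (e j) = 1" using bo jn by simp
    moreover have "f j 0 = 0" using lf[OF jn] by (rule linear_0)
    ultimately show ?thesis by simp
  qed
qed

lemma forward: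
  fixes L M :: "'a::banach set"
  assumes L: "closed_subspace L" and M: "closed_subspace M" and sc: "sc_equiv L M"
  shows "\<exists>L1 M1 K1. closed_subspace L1 \<and> L1 \<subseteq> L \<and> closed_subspace M1 \<and> M1 \<subseteq> M
              \<and> compact_op K1 \<and> finite_codim_in L1 L \<and> (\<lambda>x. x + K1 x) ` L1 = M1
              \<and> lin_iso (\<lambda>x. x + K1 x) \<and> lin_iso_between (\<lambda>x. x + K1 x) L1 M1"
proof -
  obtain K where K: "compact_op K" and KLM: "(\<lambda>x. x + K x) ` L \<subseteq> M"
    using sc unfolding sc_equiv_def by blast
  have bK: "bounded_linear K" using compact_op_linear[OF K] .
  have lK: "linear K" using bK bounded_linear.linear by blast
  define T where "T = (\<lambda>x. x + K x)"
  have lT: "linear T" unfolding T_def using lK by (simp add: linear_compose_add linear_ident)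
  define N where "N = {x. T x = 0}"
  obtain B where B: "finite B" "B \<subseteq> N" "N \<subseteq> span B"
    using finite_kernel[OF K] unfolding N_def T_def by blast
  have sN: "subspace N" unfolding N_def subspace_def
    by (simp add: linear_0[OF lT] linear_add[OF lT] linear_scale[OF lT])
  have spanBN: "span B \<subseteq> N" using B(2) sN by (rule span_minimal)
  obtain n and e :: "nat \<Rightarrow> 'a" and f :: "nat \<Rightarrow> 'a \<Rightarrow> real" where
    e: "\<forall>i<n. e i \<in> span B" and f: "\<forall>i<n. bounded_linear (f i)"
    and bo: "\<forall>i<n. \<forall>j<n. f i (e j) = (if i = j then 1 else 0)"
    and rep: "\<forall>x\<in>span B. x = (\<Sum>i<n. f i x *\<^sub>R e i)"
    using biorth[OF B(1)] by blast
  have eK: "\<forall>i<n. e i + K (e i) = 0" using e spanBN unfolding N_def T_def by blast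
  have lf: "linear (f i)" if "i < n" for i using f that bounded_linear.linear by blast
  obtain w :: "nat \<Rightarrow> 'a" where w: "\<And>c. (\<Sum>i<n. c i *\<^sub>R w i) \<in> range T \<Longrightarrow> (\<forall>i<n. c i = 0)"
    using choose_w[OF K f eK bo, of n] unfolding T_def by blast
  define F where "F x = (\<Sum>i<n. f i x *\<^sub>R w i)" for x
  define K1 where "K1 x = K x + F x" for x
  define A where "A = (\<lambda>x. x + K1 x)"
  have cF: "compact_op F" unfolding F_def
    using f by (intro compact_op_sum compact_op_rank1) auto
  have cK1: "compact_op K1" unfolding K1_def using K cF by (rule compact_op_add)
  have bK1: "bounded_linear K1" using compact_op_linear[OF cK1] .
  have bA: "bounded_linear A" unfolding A_def using bl_I_plus[OF bK1] .
  have lA: "linear A" using bA bounded_linear.linear by blast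
  have bF: "bounded_linear F" using compact_op_linear[OF cF] .
  have lF: "linear F" using bF bounded_linear.linear by blast
  have AT: "A x = T x + F x" for x unfolding A_def K1_def T_def by (simp add: add.assoc)
  have inj0: "x = 0" if "x + K1 x = 0" for x
  proof -
    have "T x = - F x" using that AT[of x] unfolding A_def by (simp add: eq_neg_iff_add_eq_0)
    also have "- F x = (\<Sum>i<n. (- f i x) *\<^sub>R w i)" unfolding F_def by (simp add: sum_negf[symmetric])
    finally have "(\<Sum>i<n. (- f i x) *\<^sub>R w i) \<in> range T" by (metis rangeI)
    then have fz: "\<forall>i<n. f i x = 0" using w[of "\<lambda>i. - f i x"] by simp
    then have "F x = 0" unfolding F_def by simp
    then have "T x = 0" using that AT[of x] unfolding A_def by simp
    then have "x \<in> span B" using B(3) unfolding N_def by blast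
    then have "x = (\<Sum>i<n. f i x *\<^sub>R e i)" using rep by blast
    also have "\<dots> = 0" using fz by simp
    finally show ?thesis .
  qed
  have surjA: "surj A" unfolding A_def using fredholm_inj_surj[OF cK1 inj0] .
  have injA: "inj A"
  proof (rule injI)
    fix x y assume "A x = A y"
    then have "A (x - y) = 0" by (simp add: linear_diff[OF lA])
    then have "x - y = 0" using inj0 unfolding A_def by blast
    then show "x = y" by simp
  qed
  obtain eps where eps: "eps > 0" "\<And>x. eps * norm x \<le> norm (x + K1 x)"
    using compact_bounded_below[OF cK1 inj0] by blast
  define G where "G = inv A"
  have GA: "G (A x) = x" for x unfolding G_def using injA by (simp add: inv_f_f)
  have AG: "A (G y) = y" for y unfolding G_def using surjA by (simp add: surj_f_inv_f)
  have bG: "bounded_linear G"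
  proof (rule bounded_linear_intro[where K="1/eps"])
    show "G (x + y) = G x + G y" for x y
    proof -
      have "A (G x + G y) = x + y" using AG by (simp add: linear_add[OF lA])
      then show ?thesis using GA by metis
    qed
    show "G (r *\<^sub>R x) = r *\<^sub>R G x" for r x
    proof -
      have "A (r *\<^sub>R G x) = r *\<^sub>R x" using AG by (simp add: linear_scale[OF lA])
      then show ?thesis using GA by metis
    qed
    show "norm (G x) \<le> norm x * (1/eps)" for x
    proof -
      have "eps * norm (G x) \<le> norm x" using eps(2)[of "G x"] AG[of x] unfolding A_def by simp
      then show ?thesis using eps(1) by (simp add: field_simps)
    qed
  qed
  have liso: "lin_iso A" unfolding lin_iso_def
    using bA bG GA AG by (intro conjI exI[of _ G]) (auto simp: fun_eq_iff)
  define L1 where "L1 = L \<inter> {x. \<forall>i<n. f i x = 0}"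
  have Lsub: "subspace L" "closed L" using L unfolding closed_subspace_def by auto
  have fcL1: "finite_codim_in L1 L" and sL1: "subspace L1"
    using finite_codim_kernels[OF Lsub(1), of n f] lf unfolding L1_def by auto
  have clK: "closed {x. \<forall>i<n. f i x = 0}"
  proof -
    have "{x. \<forall>i<n. f i x = 0} = (\<Inter>i\<in>{..<n}. {x. f i x = 0})" by auto
    moreover have "closed {x. f i x = 0}" if "i < n" for i
      using f that by (intro closed_Collect_eq linear_continuous_on continuous_on_const) auto
    ultimately show ?thesis by auto
  qed
  have cL1: "closed L1" unfolding L1_def using Lsub(2) clK by (rule closed_Int)
  define M1 where "M1 = A ` L1"
  have AL1: "A x = T x" if "x \<in> L1" for x
  proof -
    have "F x = 0" using that unfolding L1_def F_def by simp
    then show ?thesis using AT by simp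
  qed
  have M1M: "M1 \<subseteq> M"
  proof
    fix y assume "y \<in> M1"
    then obtain x where x: "x \<in> L1" "y = A x" unfolding M1_def by blast
    then have "y = T x" using AL1 by simp
    moreover have "x \<in> L" using x(1) unfolding L1_def by blast
    ultimately show "y \<in> M" using KLM unfolding T_def by blast
  qed
  have sM1: "subspace M1" unfolding M1_def using linear_subspace_image[OF lA sL1] .
  have M1G: "M1 = G -` L1"
  proof
    show "M1 \<subseteq> G -` L1" unfolding M1_def using GA by auto
    show "G -` L1 \<subseteq> M1"
    proof
      fix y assume "y \<in> G -` L1"
      then have "G y \<in> L1" by simp
      then show "y \<in> M1" unfolding M1_def using AG[of y] by (metis imageI)
    qed
  qed
  have cM1: "closed M1" unfolding M1G
    by (rule continuous_closed_vimage[OF cL1]) (rule linear_continuous_at[OF bG])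
  have bij: "bij_betw A L1 M1" unfolding M1_def
    by (rule bij_betw_imageI) (use injA in \<open>auto simp: inj_on_def inj_def\<close>)
  have contA: "continuous_on L1 A" using bA by (rule linear_continuous_on)
  have contI: "continuous_on M1 (inv_into L1 A)"
  proof -
    have "continuous_on M1 G" using bG by (rule linear_continuous_on)
    moreover have "inv_into L1 A y = G y" if yM: "y \<in> M1" for y
    proof -
      obtain x where x: "x \<in> L1" "y = A x" using yM unfolding M1_def by blast
      have "inj_on A L1" using injA by (simp add: inj_on_def inj_def)
      then have "inv_into L1 A y = x" using x by simp
      then show ?thesis using x GA by simp
    qed
    ultimately show ?thesis using continuous_on_cong by blast
  qed
  have "lin_iso_between A L1 M1" unfolding lin_iso_between_def using lA bij contA contI by blast
  moreover have "closed_subspace L1" "closed_subspace M1"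
    unfolding closed_subspace_def using sL1 cL1 sM1 cM1 by auto
  moreover have "L1 \<subseteq> L" unfolding L1_def by blast
  ultimately show ?thesis using M1M cK1 fcL1 liso unfolding A_def M1_def by blast
qed


theorem proposition3p6:
  fixes L M :: "'a::banach set"
  assumes "closed_subspace L" and "closed_subspace M"
  shows "(sc_equiv L M \<longleftrightarrow>
           (\<exists>L1 M1 K1. closed_subspace L1 \<and> L1 \<subseteq> L \<and> closed_subspace M1 \<and> M1 \<subseteq> M
              \<and> compact_op K1 \<and> finite_codim_in L1 L \<and> (\<lambda>x. x + K1 x) ` L1 = M1))
       \<and> (sc_equiv L M \<longrightarrow>
           (\<exists>L1 M1 K1. closed_subspace L1 \<and> L1 \<subseteq> L \<and> closed_subspace M1 \<and> M1 \<subseteq> M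
              \<and> compact_op K1 \<and> finite_codim_in L1 L \<and> (\<lambda>x. x + K1 x) ` L1 = M1
              \<and> lin_iso (\<lambda>x. x + K1 x) \<and> lin_iso_between (\<lambda>x. x + K1 x) L1 M1))"
  proof -
  have f: "sc_equiv L M \<longrightarrow>
           (\<exists>L1 M1 K1. closed_subspace L1 \<and> L1 \<subseteq> L \<and> closed_subspace M1 \<and> M1 \<subseteq> M
              \<and> compact_op K1 \<and> finite_codim_in L1 L \<and> (\<lambda>x. x + K1 x) ` L1 = M1
              \<and> lin_iso (\<lambda>x. x + K1 x) \<and> lin_iso_between (\<lambda>x. x + K1 x) L1 M1)"
    using forward[OF assms] by blast
  moreover have "(\<exists>L1 M1 K1. closed_subspace L1 \<and> L1 \<subseteq> L \<and> closed_subspace M1 \<and> M1 \<subseteq> M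
              \<and> compact_op K1 \<and> finite_codim_in L1 L \<and> (\<lambda>x. x + K1 x) ` L1 = M1) \<longrightarrow> sc_equiv L M"
    using backward[OF assms(2)] by blast
  ultimately show ?thesis by blast
qed

end
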